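(* Let $M=(Q,\underline q,\Sigma_I,\Sigma_O,h)$ be a deterministic, completely specified prime FSM, $R=R(q_1,x_1,Z_1)\wedge\dots\wedge R(q_k,x_k,Z_k)$ a composite requirement on $M$ (pairs $(q_i,x_i)$ pairwise distinct, $\omega_M(q_i,x_i)\in Z_i\subsetneq\Sigma_O$), and $M_1'$ the nondeterministic requirement abstraction. Let $\mathcal D$ be a set of completely specified DFSMs over $\Sigma_I,\Sigma_O$, and let $TS\subseteq\Sigma_I^*$ be a complete reduction test suite, i.e. for all $S\in\mathcal D$: $L(S)\subseteq L(M_1')$ iff $S\ \mathrm{pass}_\Leftrightarrow\ TS$. Define $\overline\Pi=\bigcup_{i=1}^k\Pi(q_i).\{x_i\}$. Then every test suite $TS_\Leftrightarrow\subseteq\Sigma_I^*$ with $\mathrm{pref}(TS)\cap\overline\Pi\subseteq TS_\Leftrightarrow$ satisfies, for all $S\in\mathcal D$, $$S\ \mathrm{pass}_\Leftrightarrow\ TS_\Leftrightarrow \iff S\models R.$$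
   Context: FSM $(Q,\underline q,\Sigma_I,\Sigma_O,h)$ with $h\subseteq Q\times\Sigma_I\times\Sigma_O\times Q$; the language $L(q)$ of a state is the set of I/O-traces $(x_1,y_1)\dots(x_k,y_k)$ (including the empty trace) realisable by a transition path from $q$; $L(M)=L(\underline q)$. A completely specified DFSM has transition function $\delta$ and output function $\omega$, extended to input sequences in the usual way; $q\text{-after-}\bar x=\delta(q,\bar x)$. Prime machine: DFSM with minimal number of states among language-equivalent DFSMs. $\mathrm{pref}(X)$ denotes the set of all prefixes of traces in $X$; $X.Y=\{x.y\mid x\in X,y\in Y\}$. $\Pi(q)=\{\bar x\in\Sigma_I^*\mid\underline q\text{-after-}\bar x=q\}$ (in $M$). $S\models R(q,x,Z)$ iff $\omega_S(\underline s\text{-after-}\pi,x)\in Z$ for all $\pi\in\Pi(q)$, where $\underline s$ is the initial state of $S$; $S\models R$ iff each conjunct holds. Requirement abstraction $M_1$: same states, initial state and transition function $\delta_M$ as $M$, output $\omega_{M_1}(q_i,x_i)=Z_i$ and $\omega_{M_1}(q,x)=\Sigma_O$ otherwise. Nondeterministic abstraction $M_1'=(Q,\underline q,\Sigma_I,\Sigma_O,h_1')$ with $(q,x,y,q')\in h_1'$ iff $q'=\delta_M(q,x)$ and $y\in\omega_{M_1}(q,x)$; its set-valued output function $\omega_{M_1'}(q,\bar x)$ is the set of output traces $\bar y$ with $\bar x/\bar y\in L(q)$ in $M_1'$. Pass criterion: for a DFSM $S$ and $\bar x\in\Sigma_I^*$, $S\ \mathrm{pass}_\Leftrightarrow\ \bar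 x$ iff $\omega_S(\underline s,\bar x)\in\omega_{M_1'}(\underline q,\bar x)$; for a set $T$, $S\ \mathrm{pass}_\Leftrightarrow\ T$ iff $S\ \mathrm{pass}_\Leftrightarrow\ \bar x$ for all $\bar x\in T$. *)

theory Defs
  imports Main
begin

record ('q, 'x, 'y) fsm =
  states  :: "'q set"
  initial :: "'q"
  inputs  :: "'x set"
  outputs :: "'y set"
  trans   :: "('q \<times> 'x \<times> 'y \<times> 'q) set"

definition well_formed :: "('q, 'x, 'y) fsm \<Rightarrow> bool" where
  "well_formed M \<longleftrightarrow> finite (states M) \<and> finite (inputs M) \<and> finite (outputs M)
     \<and> initial M \<in> states M
     \<and> trans M \<subseteq> states M \<times> inputs M \<times> outputs M \<times> states M"

definition deterministic :: "('q, 'x, 'y) fsm \<Rightarrow> bool" where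
  "deterministic M \<longleftrightarrow> (\<forall>q x y q' y' q''. (q, x, y, q') \<in> trans M \<longrightarrow> (q, x, y', q'') \<in> trans M
       \<longrightarrow> y = y' \<and> q' = q'')"

definition completely_specified :: "('q, 'x, 'y) fsm \<Rightarrow> bool" where
  "completely_specified M \<longleftrightarrow> (\<forall>q \<in> states M. \<forall>x \<in> inputs M. \<exists>y q'. (q, x, y, q') \<in> trans M)"

definition cs_dfsm :: "('q, 'x, 'y) fsm \<Rightarrow> bool" where
  "cs_dfsm M \<longleftrightarrow> well_formed M \<and> deterministic M \<and> completely_specified M"

inductive lang_rel :: "('q, 'x, 'y) fsm \<Rightarrow> 'q \<Rightarrow> ('x \<times> 'y) list \<Rightarrow> bool"
  for M :: "('q, 'x, 'y) fsm" where
  lang_nil: "lang_rel M q []"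
| lang_cons: "(q, x, y, q') \<in> trans M \<Longrightarrow> lang_rel M q' tr \<Longrightarrow> lang_rel M q ((x, y) # tr)"

definition lang :: "('q, 'x, 'y) fsm \<Rightarrow> 'q \<Rightarrow> ('x \<times> 'y) list set" where
  "lang M q = {tr. lang_rel M q tr}"

definition L :: "('q, 'x, 'y) fsm \<Rightarrow> ('x \<times> 'y) list set" where
  "L M = lang M (initial M)"

definition delta :: "('q, 'x, 'y) fsm \<Rightarrow> 'q \<Rightarrow> 'x \<Rightarrow> 'q" where
  "delta M q x = (THE q'. \<exists>y. (q, x, y, q') \<in> trans M)"

definition omega :: "('q, 'x, 'y) fsm \<Rightarrow> 'q \<Rightarrow> 'x \<Rightarrow> 'y" where
  "omega M q x = (THE y. \<exists>q'. (q, x, y, q') \<in> trans M)"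

fun after :: "('q, 'x, 'y) fsm \<Rightarrow> 'q \<Rightarrow> 'x list \<Rightarrow> 'q" where
  "after M q [] = q"
| "after M q (x # xs) = after M (delta M q x) xs"

fun omega_seq :: "('q, 'x, 'y) fsm \<Rightarrow> 'q \<Rightarrow> 'x list \<Rightarrow> 'y list" where
  "omega_seq M q [] = []"
| "omega_seq M q (x # xs) = omega M q x # omega_seq M (delta M q x) xs"

text \<open>Prime machine: minimal number of states among language-equivalent DFSMs
  (any DFSM with at most card (states M) states can be renamed into the state type of M,
   so quantifying over machines of the same state type is no restriction).\<close>
definition prime_fsm :: "('q, 'x, 'y) fsm \<Rightarrow> bool" where
  "prime_fsm M \<longleftrightarrow> cs_dfsm M \<and>
     (\<forall>M' :: ('q, 'x, 'y) fsm. cs_dfsm M' \<and> inputs M' = inputs M \<and> outputs M' = outputs M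
        \<and> L M' = L M \<longrightarrow> card (states M) \<le> card (states M'))"

definition Pi_set :: "('q, 'x, 'y) fsm \<Rightarrow> 'q \<Rightarrow> 'x list set" where
  "Pi_set M q = {xs \<in> lists (inputs M). after M (initial M) xs = q}"

type_synonym ('q, 'x, 'y) requirement = "('q \<times> 'x \<times> 'y set) list"

definition valid_requirement :: "('q, 'x, 'y) fsm \<Rightarrow> ('q, 'x, 'y) requirement \<Rightarrow> bool" where
  "valid_requirement M R \<longleftrightarrow>
     distinct (map (\<lambda>(q, x, Z). (q, x)) R) \<and>
     (\<forall>(q, x, Z) \<in> set R. q \<in> states M \<and> x \<in> inputs M \<and> omega M q x \<in> Z \<and> Z \<subset> outputs M)"

definition satisfies :: "('s, 'x, 'y) fsm \<Rightarrow> ('q, 'x, 'y) fsm \<Rightarrow> ('q, 'x, 'y) requirement \<Rightarrow> bool" where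
  "satisfies S M R \<longleftrightarrow>
     (\<forall>(q, x, Z) \<in> set R. \<forall>\<pi> \<in> Pi_set M q. omega S (after S (initial S) \<pi>) x \<in> Z)"

definition omega_M1 :: "('q, 'x, 'y) fsm \<Rightarrow> ('q, 'x, 'y) requirement \<Rightarrow> 'q \<Rightarrow> 'x \<Rightarrow> 'y set" where
  "omega_M1 M R q x = (if \<exists>Z. (q, x, Z) \<in> set R then (THE Z. (q, x, Z) \<in> set R) else outputs M)"

definition abstraction :: "('q, 'x, 'y) fsm \<Rightarrow> ('q, 'x, 'y) requirement \<Rightarrow> ('q, 'x, 'y) fsm" where
  "abstraction M R = \<lparr> states = states M, initial = initial M, inputs = inputs M, outputs = outputs M,
     trans = {(q, x, y, q'). q \<in> states M \<and> x \<in> inputs M \<and> q' = delta M q x \<and> y \<in> omega_M1 M R q x} \<rparr>"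

definition omega_set :: "('q, 'x, 'y) fsm \<Rightarrow> 'q \<Rightarrow> 'x list \<Rightarrow> 'y list set" where
  "omega_set M q xs = {ys. length ys = length xs \<and> zip xs ys \<in> lang M q}"

definition pass :: "('s, 'x, 'y) fsm \<Rightarrow> ('q, 'x, 'y) fsm \<Rightarrow> 'x list \<Rightarrow> bool" where
  "pass S M1' xs \<longleftrightarrow> omega_seq S (initial S) xs \<in> omega_set M1' (initial M1') xs"

definition pass_set :: "('s, 'x, 'y) fsm \<Rightarrow> ('q, 'x, 'y) fsm \<Rightarrow> 'x list set \<Rightarrow> bool" where
  "pass_set S M1' T \<longleftrightarrow> (\<forall>xs \<in> T. pass S M1' xs)"

definition pref :: "'a list set \<Rightarrow> 'a list set" where
  "pref X = {p. \<exists>t \<in> X. \<exists>s. t = p @ s}"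

definition Pi_bar :: "('q, 'x, 'y) fsm \<Rightarrow> ('q, 'x, 'y) requirement \<Rightarrow> 'x list set" where
  "Pi_bar M R = (\<Union>(q, x, Z) \<in> set R. (\<lambda>\<pi>. \<pi> @ [x]) ` Pi_set M q)"

end

theory Submission
  imports Defs
begin

lemma cs_step:
  assumes "cs_dfsm S" "s \<in> states S" "x \<in> inputs S"
  shows "(s, x, omega S s x, delta S s x) \<in> trans S"
proof -
  obtain y q' where t: "(s,x,y,q') \<in> trans S"
    using assms unfolding cs_dfsm_def completely_specified_def by blast
  have det: "deterministic S" using assms(1) unfolding cs_dfsm_def by simp
  have "omega S s x = y" unfolding omega_def
    by (rule the_equality) (use t det in \<open>auto simp: deterministic_def\<close>)
  moreover have "delta S s x = q'" unfolding delta_def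
    by (rule the_equality) (use t det in \<open>auto simp: deterministic_def\<close>)
  ultimately show ?thesis using t by simp
qed

lemma cs_step_states:
  assumes "cs_dfsm S" "s \<in> states S" "x \<in> inputs S"
  shows "delta S s x \<in> states S" "omega S s x \<in> outputs S"
  using cs_step[OF assms] assms(1) unfolding cs_dfsm_def well_formed_def by auto

lemma after_in:
  assumes "cs_dfsm S" "s \<in> states S" "xs \<in> lists (inputs S)"
  shows "after S s xs \<in> states S"
  using assms(2,3) by (induction xs arbitrary: s) (auto simp: cs_step_states[OF assms(1)])

lemma lang_S:
  assumes "cs_dfsm S" "s \<in> states S" "xs \<in> lists (inputs S)"
  shows "lang_rel S s (zip xs (omega_seq S s xs))"
  using assms(2,3)
  by (induction xs arbitrary: s)
     (auto intro!: lang_rel.intros cs_step[OF assms(1)] simp: cs_step_states[OF assms(1)])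

lemma len_omega_seq: "length (omega_seq S s xs) = length xs"
  by (induction xs arbitrary: s) auto

lemma lang_rel_cons: "lang_rel A q ((x,y)#tr) \<longleftrightarrow> (\<exists>q'. (q,x,y,q') \<in> trans A \<and> lang_rel A q' tr)"
  by (auto intro: lang_rel.intros elim: lang_rel.cases)

lemma pass_iff:
  assumes "cs_dfsm M" "cs_dfsm S" "inputs S = inputs M"
    and "q \<in> states M" "s \<in> states S" "xs \<in> lists (inputs M)"
  shows "omega_seq S s xs \<in> omega_set (abstraction M R) q xs \<longleftrightarrow>
    (\<forall>i<length xs. omega S (after S s (take i xs)) (xs!i) \<in> omega_M1 M R (after M q (take i xs)) (xs!i))"
  using assms(4-6)
proof (induction xs arbitrary: q s)
  case Nil
  then show ?case by (simp add: omega_set_def lang_def lang_nil)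
next
  case (Cons x xs)
  have x: "x \<in> inputs M" "xs \<in> lists (inputs M)" using Cons.prems by auto
  have q': "delta M q x \<in> states M" using cs_step_states[OF assms(1) Cons.prems(1) x(1)] by simp
  have s': "delta S s x \<in> states S" using cs_step_states[OF assms(2) Cons.prems(2)] x(1) assms(3) by simp
  have "omega_seq S s (x#xs) \<in> omega_set (abstraction M R) q (x#xs) \<longleftrightarrow>
     omega S s x \<in> omega_M1 M R q x \<and> omega_seq S (delta S s x) xs \<in> omega_set (abstraction M R) (delta M q x) xs"
    using Cons.prems x by (auto simp: omega_set_def lang_def lang_rel_cons abstraction_def len_omega_seq)
  also have "\<dots> \<longleftrightarrow> (\<forall>i<length (x#xs). omega S (after S s (take i (x#xs))) ((x#xs)!i) \<in> omega_M1 M R (after M q (take i (x#xs))) ((x#xs)!i))"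
    using Cons.IH[OF q' s' x(2)] by (simp add: All_less_Suc2)
  finally show ?case .
qed

lemma omega_M1_in:
  assumes "valid_requirement M R" "(q,x,Z) \<in> set R"
  shows "omega_M1 M R q x = Z"
proof -
  have d: "distinct (map (\<lambda>(q, x, Z). (q, x)) R)" using assms(1) by (simp add: valid_requirement_def)
  have "(THE Z. (q, x, Z) \<in> set R) = Z"
  proof (rule the_equality)
    fix Z' assume "(q,x,Z') \<in> set R"
    with assms(2) d show "Z' = Z"
      by (metis (no_types, lifting) case_prod_conv distinct_map inj_on_contraD prod.inject)
  qed (rule assms(2))
  then show ?thesis using assms(2) by (auto simp: omega_M1_def)
qed

theorem theorem4:
  fixes M :: "('q, 'x, 'y) fsm"
    and R :: "('q, 'x, 'y) requirement"
    and D :: "('s, 'x, 'y) fsm set"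
    and TS :: "'x list set"
  assumes "prime_fsm M"
    and "valid_requirement M R"
    and "\<forall>S \<in> D. cs_dfsm S \<and> inputs S = inputs M \<and> outputs S = outputs M"
    and "TS \<subseteq> lists (inputs M)"
    and "\<forall>S \<in> D. L S \<subseteq> L (abstraction M R) \<longleftrightarrow> pass_set S (abstraction M R) TS"
  shows "\<forall>TS'. TS' \<subseteq> lists (inputs M) \<longrightarrow> pref TS \<inter> Pi_bar M R \<subseteq> TS' \<longrightarrow>
           (\<forall>S \<in> D. pass_set S (abstraction M R) TS' \<longleftrightarrow> satisfies S M R)"
proof (intro allI impI ballI)
  fix TS' S
  assume T1: "TS' \<subseteq> lists (inputs M)" and T2: "pref TS \<inter> Pi_bar M R \<subseteq> TS'" and SD: "S \<in> D"
  have M: "cs_dfsm M" using assms(1) by (simp add: prime_fsm_def)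
  have S: "cs_dfsm S" and inS: "inputs S = inputs M" and outS: "outputs S = outputs M"
    using assms(3) SD by auto
  have q0: "initial M \<in> states M" using M by (simp add: cs_dfsm_def well_formed_def)
  have s0: "initial S \<in> states S" using S by (simp add: cs_dfsm_def well_formed_def)
  define A where "A = abstraction M R"
  have iA: "initial A = initial M" by (simp add: A_def abstraction_def)
  have P: "pass S A xs \<longleftrightarrow> (\<forall>i<length xs. omega S (after S (initial S) (take i xs)) (xs!i)
      \<in> omega_M1 M R (after M (initial M) (take i xs)) (xs!i))" if "xs \<in> lists (inputs M)" for xs
    using pass_iff[OF M S inS q0 s0 that, of R] by (simp add: pass_def A_def abstraction_def)
  have outin: "omega S (after S (initial S) p) x \<in> outputs M" if "p \<in> lists (inputs M)" "x \<in> inputs M" for p x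
    using cs_step_states(2)[OF S after_in[OF S s0] ] that inS outS by simp
  show "pass_set S (abstraction M R) TS' \<longleftrightarrow> satisfies S M R"
    unfolding A_def[symmetric]
  proof
    assume pass: "pass_set S A TS'"
    show "satisfies S M R" unfolding satisfies_def
    proof (clarify)
      fix q x Z \<pi> assume qR: "(q,x,Z) \<in> set R" and \<pi>: "\<pi> \<in> Pi_set M q"
      show "omega S (after S (initial S) \<pi>) x \<in> Z"
      proof (rule ccontr)
        assume bad: "omega S (after S (initial S) \<pi>) x \<notin> Z"
        have \<pi>l: "\<pi> \<in> lists (inputs M)" and \<pi>q: "after M (initial M) \<pi> = q"
          using \<pi> by (auto simp: Pi_set_def)
        have x: "x \<in> inputs M" using assms(2) qR by (auto simp: valid_requirement_def)
        have xsl: "\<pi> @ [x] \<in> lists (inputs M)" using \<pi>l x by simp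
        have np: "\<not> pass S A (\<pi> @ [x])"
        proof
          assume "pass S A (\<pi> @ [x])"
          hence all: "\<forall>i<length (\<pi>@[x]). omega S (after S (initial S) (take i (\<pi>@[x]))) ((\<pi>@[x])!i)
      \<in> omega_M1 M R (after M (initial M) (take i (\<pi>@[x]))) ((\<pi>@[x])!i)"
            using P[OF xsl] by blast
          have "omega S (after S (initial S) (take (length \<pi>) (\<pi>@[x]))) ((\<pi>@[x])!length \<pi>)
      \<in> omega_M1 M R (after M (initial M) (take (length \<pi>) (\<pi>@[x]))) ((\<pi>@[x])!length \<pi>)"
            using all[rule_format, of "length \<pi>"] by simp
          hence "omega S (after S (initial S) \<pi>) x \<in> omega_M1 M R (after M (initial M) \<pi>) x" by simp
          thus False using bad \<pi>q omega_M1_in[OF assms(2) qR] by simp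
        qed
        have "\<not> L S \<subseteq> L A"
        proof
          assume sub: "L S \<subseteq> L A"
          have "zip (\<pi>@[x]) (omega_seq S (initial S) (\<pi>@[x])) \<in> L S"
            using lang_S[OF S s0] xsl inS by (simp add: L_def lang_def)
          hence "zip (\<pi>@[x]) (omega_seq S (initial S) (\<pi>@[x])) \<in> lang A (initial A)"
            using sub by (auto simp: L_def)
          hence "pass S A (\<pi>@[x])" by (simp add: pass_def omega_set_def len_omega_seq)
          with np show False by simp
        qed
        hence "\<not> pass_set S A TS" using assms(5) SD A_def by auto
        then obtain t where tT: "t \<in> TS" and nt: "\<not> pass S A t" by (auto simp: pass_set_def)
        have tl: "t \<in> lists (inputs M)" using tT assms(4) by auto
        obtain i where i: "i < length t" and bi: "omega S (after S (initial S) (take i t)) (t!i)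
            \<notin> omega_M1 M R (after M (initial M) (take i t)) (t!i)"
          using nt P[OF tl] by auto
        have til: "take i t \<in> lists (inputs M)" using tl by (meson in_listsD in_listsI in_set_takeD)
        have ti: "t!i \<in> inputs M" using tl i by (meson in_listsD nth_mem)
        obtain Z' where Z': "(after M (initial M) (take i t), t!i, Z') \<in> set R"
        proof (cases "\<exists>Z'. (after M (initial M) (take i t), t!i, Z') \<in> set R")
          case False
          hence "omega_M1 M R (after M (initial M) (take i t)) (t!i) = outputs M"
            by (simp add: omega_M1_def)
          with bi outin[OF til ti] show ?thesis by simp
        qed auto
        have tS: "take (Suc i) t = take i t @ [t!i]" using i by (simp add: take_Suc_conv_app_nth)
        have "take (Suc i) t \<in> pref TS" unfolding pref_def
          using tT by (metis (mono_tags, lifting) append_take_drop_id mem_Collect_eq)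
        moreover have "take (Suc i) t \<in> Pi_bar M R" unfolding Pi_bar_def tS
          using Z' til by (force simp: Pi_set_def)
        ultimately have "take (Suc i) t \<in> TS'" using T2 by auto
        hence "pass S A (take (Suc i) t)" using pass by (simp add: pass_set_def)
        moreover have "take (Suc i) t \<in> lists (inputs M)" using tl by (meson in_listsD in_listsI in_set_takeD)
        ultimately have all: "\<forall>j<length (take (Suc i) t). omega S (after S (initial S) (take j (take (Suc i) t))) ((take (Suc i) t)!j)
      \<in> omega_M1 M R (after M (initial M) (take j (take (Suc i) t))) ((take (Suc i) t)!j)"
          using P by blast
        have "i < length (take (Suc i) t)" using i by simp
        from all[rule_format, OF this] have "omega S (after S (initial S) (take i t)) (t!i)
            \<in> omega_M1 M R (after M (initial M) (take i t)) (t!i)" by simp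
        with bi show False by simp
      qed
    qed
  next
    assume sat: "satisfies S M R"
    show "pass_set S A TS'" unfolding pass_set_def
    proof
      fix xs assume "xs \<in> TS'"
      hence xl: "xs \<in> lists (inputs M)" using T1 by auto
      show "pass S A xs" unfolding P[OF xl]
      proof (intro allI impI)
        fix i assume i: "i < length xs"
        have til: "take i xs \<in> lists (inputs M)" using xl by (meson in_listsD in_listsI in_set_takeD)
        have ti: "xs!i \<in> inputs M" using xl i by (meson in_listsD nth_mem)
        show "omega S (after S (initial S) (take i xs)) (xs!i) \<in> omega_M1 M R (after M (initial M) (take i xs)) (xs!i)"
        proof (cases "\<exists>Z. (after M (initial M) (take i xs), xs!i, Z) \<in> set R")
          case True
          then obtain Z where Z: "(after M (initial M) (take i xs), xs!i, Z) \<in> set R" by blast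
          have "take i xs \<in> Pi_set M (after M (initial M) (take i xs))" using til by (simp add: Pi_set_def)
          with sat Z show ?thesis using omega_M1_in[OF assms(2) Z] by (fastforce simp: satisfies_def)
        next
          case False
          thus ?thesis using outin[OF til ti] by (simp add: omega_M1_def)
        qed
      qed
    qed
  qed
qed

end
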